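(* Let $W_0(s)=\int_0^{\bar\theta}\frac{1-F(\theta)}{f(\theta)}s(\theta)\,dF(\theta)$. For nondecreasing $s,\hat s:\Theta\to[0,1]$ with $\hat s\in\mathrm{MPS}(s)$: (i) if $F$ satisfies IFR, then $W_0(\hat s)\ge W_0(s)$; (ii) $W_0(\hat s)\le W_0(s)$ holds for all such pairs $(s,\hat s)$ if and only if $F$ satisfies DFR.
   Context: Let $\bar\theta\in(0,\infty]$, $\Theta=[0,\bar\theta)$ (closed at $\bar\theta$ if finite), $F$ a cdf on $\Theta$ with continuous, strictly positive density $f$, $dF=f\,d\theta$, and finite mean. IFR means $\frac{1-F}{f}$ is nonincreasing on $\Theta$; DFR means it is nondecreasing on $[0,\bar\theta)$. For bounded measurable $a,b$ on $\Theta$, write $b\in\mathrm{MPS}(a)$ if $\int_x^{\bar\theta}b\,dF\le\int_x^{\bar\theta}a\,dF$ for all $x\in\Theta$, with equality at $x=0$. ($W_0(s)$ equals consumer surplus without exclusion up to a constant independent of $s$.) *)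

theory Defs
  imports "HOL-Analysis.Analysis"
begin

text \<open>Type space: \<open>Theta tb = [0, tb]\<close> if \<open>tb\<close> is finite, \<open>[0,\<infinity>)\<close> if \<open>tb = \<infinity>\<close>.\<close>
definition Theta :: "ereal \<Rightarrow> real set" where
  "Theta tb = {x. 0 \<le> x \<and> ereal x \<le> tb}"

definition ThetaO :: "ereal \<Rightarrow> real set" where
  "ThetaO tb = {x. 0 \<le> x \<and> ereal x < tb}"

definition IFR :: "ereal \<Rightarrow> (real \<Rightarrow> real) \<Rightarrow> (real \<Rightarrow> real) \<Rightarrow> bool" where
  "IFR tb F f \<longleftrightarrow> antimono_on (Theta tb) (\<lambda>x. (1 - F x) / f x)"

definition DFR :: "ereal \<Rightarrow> (real \<Rightarrow> real) \<Rightarrow> (real \<Rightarrow> real) \<Rightarrow> bool" where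
  "DFR tb F f \<longleftrightarrow> mono_on (ThetaO tb) (\<lambda>x. (1 - F x) / f x)"

text \<open>\<open>in_MPS tb f b a\<close>: for bounded measurable \<open>a, b\<close> on \<open>Theta\<close>, \<open>b \<in> MPS(a)\<close> w.r.t. \<open>dF = f d\<theta>\<close>.\<close>
definition in_MPS :: "ereal \<Rightarrow> (real \<Rightarrow> real) \<Rightarrow> (real \<Rightarrow> real) \<Rightarrow> (real \<Rightarrow> real) \<Rightarrow> bool" where
  "in_MPS tb f b a \<longleftrightarrow>
     set_borel_measurable lborel (Theta tb) a \<and> set_borel_measurable lborel (Theta tb) b \<and>
     bounded (a ` Theta tb) \<and> bounded (b ` Theta tb) \<and>
     (\<forall>x\<in>Theta tb.
        (LINT t:{t\<in>Theta tb. x \<le> t}|lborel. b t * f t)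
          \<le> (LINT t:{t\<in>Theta tb. x \<le> t}|lborel. a t * f t)) \<and>
     (LINT t:Theta tb|lborel. b t * f t) = (LINT t:Theta tb|lborel. a t * f t)"

definition W0 :: "ereal \<Rightarrow> (real \<Rightarrow> real) \<Rightarrow> (real \<Rightarrow> real) \<Rightarrow> (real \<Rightarrow> real) \<Rightarrow> real" where
  "W0 tb F f s = (LINT t:Theta tb|lborel. ((1 - F t) / f t) * s t * f t)"

definition admissible :: "ereal \<Rightarrow> (real \<Rightarrow> real) \<Rightarrow> bool" where
  "admissible tb s \<longleftrightarrow> mono_on (Theta tb) s \<and> (\<forall>x\<in>Theta tb. 0 \<le> s x \<and> s x \<le> 1)"

end

theory Submission
  imports Defs
begin


lemma Theta_cases:
  assumes "0 < tb"
  shows "(\<exists>T>0. tb = ereal T \<and> Theta tb = {0..T} \<and> ThetaO tb = {0..<T}) \<or>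
         (tb = \<infinity> \<and> Theta tb = {0..} \<and> ThetaO tb = {0..})"
proof (cases tb)
  case (real T)
  then show ?thesis using assms by (auto simp: Theta_def ThetaO_def)
next
  case PInf
  then show ?thesis by (auto simp: Theta_def ThetaO_def)
next
  case MInf
  then show ?thesis using assms by auto
qed

lemma core:
  fixes A B P1 P2 r :: real
  assumes "A > 0" "B > 0" "P1 + P2 = r * (A + B)" "B * P1 \<le> A * P2" "P1 > r * A \<or> P2 < r * B"
  shows False
proof -
  have "P1 > r * A" "P2 < r * B" using assms(3,5) by (auto simp: algebra_simps)
  then have "B * P1 > B * (r * A)" "A * P2 < A * (r * B)" using assms(1,2) by auto
  then show False using assms(4) by (simp add: algebra_simps)
qed

lemma limx_arith:
  fixes d Gx fx e r Q P :: real
  assumes d: "d > 0" and dk: "d * (fx + e) < Gx - r * (fx + e)" and r: "r > 0"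
    and Q: "Q \<le> d * (fx + e)" and P: "P \<ge> d * (Gx - Q)"
  shows "P > r * Q"
proof -
  have "Gx - Q > r * (fx + e)" using dk Q by linarith
  then have "d * (Gx - Q) > d * (r * (fx + e))" using d by simp
  moreover have "r * Q \<le> r * (d * (fx + e))" using Q r by simp
  ultimately show ?thesis using P by (simp add: algebra_simps)
qed

lemma limy_arith:
  fixes d Gy l r Q P :: real
  assumes d: "d > 0" and dr: "d < r" and dl: "d * l < r * l - Gy" and l: "l > 0"
    and Q: "Q \<ge> d * l" and P: "P \<le> d * (Gy + Q)"
  shows "P < r * Q"
proof -
  have "(r - d) * l > Gy" using dl by (simp add: algebra_simps)
  then have "d * ((r - d) * l) > d * Gy" using d by simp
  moreover have "(r - d) * Q \<ge> (r - d) * (d * l)" using Q dr by (intro mult_left_mono) auto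
  ultimately have "d * Gy < (r - d) * Q" by (simp add: algebra_simps)
  then show ?thesis using P by (simp add: algebra_simps)
qed

locale mps =
  fixes tb :: ereal and F f :: "real \<Rightarrow> real"
  assumes tb_pos: "0 < tb"
    and f_cont: "continuous_on (Theta tb) f"
    and f_pos: "\<forall>x\<in>Theta tb. 0 < f x"
    and f_int: "set_integrable lborel (Theta tb) f"
    and f_total: "(LINT t:Theta tb|lborel. f t) = 1"
    and F_def: "\<forall>x\<in>Theta tb. F x = (LINT t:{0..x}|lborel. f t)"
    and finite_mean: "set_integrable lborel (Theta tb) (\<lambda>t. t * f t)"
begin

abbreviation "Th \<equiv> Theta tb"

lemma Th_mem: "t \<in> Th \<longleftrightarrow> 0 \<le> t \<and> ereal t \<le> tb"
  by (simp add: Theta_def)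

lemma ThO_mem: "t \<in> ThetaO tb \<longleftrightarrow> 0 \<le> t \<and> ereal t < tb"
  by (simp add: ThetaO_def)

lemma ThO_sub: "ThetaO tb \<subseteq> Th"
  by (auto simp: Th_mem ThO_mem)

lemma zero_Th: "0 \<in> Th" "0 \<in> ThetaO tb"
  using tb_pos by (auto simp: Th_mem ThO_mem zero_ereal_def)

lemma Th_down: "v \<in> Th \<Longrightarrow> 0 \<le> u \<Longrightarrow> u \<le> v \<Longrightarrow> u \<in> Th"
  using order_trans[of "ereal u" "ereal v" tb] by (auto simp: Th_mem)

lemma ThO_down: "v \<in> ThetaO tb \<Longrightarrow> 0 \<le> u \<Longrightarrow> u \<le> v \<Longrightarrow> u \<in> ThetaO tb"
  using le_less_trans[of "ereal u" "ereal v" tb] by (auto simp: ThO_mem)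

lemma Th_borel[measurable]: "Th \<in> sets borel"
  using Theta_cases[OF tb_pos] by auto

lemma ThO_borel[measurable]: "ThetaO tb \<in> sets borel"
  using Theta_cases[OF tb_pos] by auto

lemma Th_lborel[measurable]: "Th \<in> sets lborel"
  by simp

definition "ff t = indicator Th t * f t"

lemma ff_meas[measurable]: "ff \<in> borel_measurable borel"
  unfolding ff_def using borel_measurable_continuous_on_indicator[OF Th_borel f_cont] by simp

lemma ff_nonneg: "0 \<le> ff t"
  using f_pos by (auto simp: ff_def indicator_def less_imp_le)

lemma f_int_sub: "A \<subseteq> Th \<Longrightarrow> A \<in> sets borel \<Longrightarrow> set_integrable lborel A f"
  using set_integrable_subset[OF f_int] by auto

lemma Icc_sub: "v \<in> Th \<Longrightarrow> {0..v} \<subseteq> Th"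
  using Th_down by auto

lemma F_split:
  assumes "u \<in> Th" "v \<in> Th" "u \<le> v"
  shows "F v - F u = (LINT t:{u<..v}|lborel. f t)"
proof -
  have "{0..v} = {0..u} \<union> {u<..v}" using assms Th_mem by auto
  moreover have "{0..u} \<inter> {u<..v} = {}" by auto
  moreover have "{0..u} \<subseteq> Th" using Icc_sub assms by auto
  moreover have "{u<..v} \<subseteq> Th"
  proof
    fix x assume "x \<in> {u<..v}"
    moreover have "0 \<le> u" using assms Th_mem by auto
    ultimately show "x \<in> Th" using Th_down[OF assms(2)] by auto
  qed
  ultimately have "(LINT t:{0..v}|lborel. f t) = (LINT t:{0..u}|lborel. f t) + (LINT t:{u<..v}|lborel. f t)"
    by (metis atLeastAtMost_borel greaterThanAtMost_borel f_int_sub set_integral_Un)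
  thus ?thesis using F_def assms by simp
qed

lemma tail_aux:
  assumes "v \<in> Th"
  shows "(LINT t:{t\<in>Th. v < t}|lborel. f t) = 1 - F v"
proof -
  have "Th = {0..v} \<union> {t\<in>Th. v < t}" using assms Icc_sub Th_mem by auto
  moreover have "{0..v} \<inter> {t\<in>Th. v < t} = {}" by auto
  moreover have "{t\<in>Th. v < t} \<in> sets borel" by measurable
  ultimately have "(LINT t:Th|lborel. f t) = (LINT t:{0..v}|lborel. f t) + (LINT t:{t\<in>Th. v < t}|lborel. f t)"
    by (metis (no_types, lifting) Icc_sub assms atLeastAtMost_borel f_int_sub mem_Collect_eq set_integral_Un subsetI)
  thus ?thesis using F_def assms f_total by simp
qed

lemma AE_pt: "AE x in lborel. x \<noteq> (c::real)"
  by (rule AE_lborel_singleton)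

lemma set_meas_f: "A \<in> sets borel \<Longrightarrow> A \<subseteq> Th \<Longrightarrow> set_borel_measurable lborel A f"
proof -
  assume "A \<in> sets borel" "A \<subseteq> Th"
  then have "set_integrable lborel A f" by (rule f_int_sub[rotated])
  then show ?thesis unfolding set_integrable_def set_borel_measurable_def by (rule borel_measurable_integrable)
qed

lemma tail:
  assumes "v \<in> Th"
  shows "(LINT t:{t\<in>Th. v \<le> t}|lborel. f t) = 1 - F v"
proof -
  have "(LINT t:{t\<in>Th. v \<le> t}|lborel. f t) = (LINT t:{t\<in>Th. v < t}|lborel. f t)"
  proof (rule set_integral_cong_set)
    show "set_borel_measurable lborel {t \<in> Th. v < t} f" by (rule set_meas_f) auto
    show "set_borel_measurable lborel {t \<in> Th. v \<le> t} f" by (rule set_meas_f) auto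
    show "AE x in lborel. (x \<in> {t \<in> Th. v < t}) = (x \<in> {t \<in> Th. v \<le> t})"
      using AE_pt[of v] by eventually_elim auto
  qed
  thus ?thesis using tail_aux assms by simp
qed


lemma f_nonneg: "t \<in> Th \<Longrightarrow> 0 \<le> f t"
  using f_pos less_imp_le by blast

lemma set_int_nonneg:
  fixes g :: "real \<Rightarrow> real"
  assumes "\<And>t. t \<in> A \<Longrightarrow> 0 \<le> g t"
  shows "0 \<le> (LINT t:A|lborel. g t)"
  unfolding set_lebesgue_integral_def
  by (rule integral_nonneg_AE) (use assms in \<open>auto simp: indicator_def\<close>)

lemma F_nonneg: "t \<in> Th \<Longrightarrow> 0 \<le> F t"
  using F_def set_int_nonneg[of "{0..t}" f] f_nonneg Th_down by auto

lemma G_nonneg: "t \<in> Th \<Longrightarrow> 0 \<le> 1 - F t"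
  using tail_aux[of t] set_int_nonneg[of "{u\<in>Th. t < u}" f] f_nonneg by auto

lemma F_le: "u \<in> Th \<Longrightarrow> v \<in> Th \<Longrightarrow> u \<le> v \<Longrightarrow> F u \<le> F v"
  using F_split[of u v] set_int_nonneg[of "{u<..v}" f] f_nonneg Th_down[of v] Th_mem by force

lemma F_mono: "mono_on Th F"
  by (rule mono_onI) (rule F_le)

lemma F_meas[measurable]: "(\<lambda>t. indicator Th t * F t) \<in> borel_measurable borel"
proof -
  have "F \<in> borel_measurable (restrict_space borel Th)" by (rule borel_measurable_mono_on_fnc[OF F_mono])
  then show ?thesis using borel_measurable_restrict_space_iff[of Th borel F] by simp
qed

definition "GG t = indicator Th t * (1 - F t)"

lemma GG_meas[measurable]: "GG \<in> borel_measurable borel"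
proof -
  have "GG = (\<lambda>t. indicator Th t - indicator Th t * F t)"
    by (auto simp: GG_def fun_eq_iff algebra_simps)
  then show ?thesis using F_meas by simp
qed

lemma GG_nonneg: "0 \<le> GG t"
  using G_nonneg by (auto simp: GG_def indicator_def)

lemma G_nn:
  assumes "t \<in> Th"
  shows "ennreal (1 - F t) = (\<integral>\<^sup>+ u. ennreal (ff u * indicator {t<..} u) \<partial>lborel)"
proof -
  have si: "set_integrable lborel {u\<in>Th. t < u} f" by (rule f_int_sub) auto
  have eq: "(\<lambda>u. ff u * indicator {t<..} u) = (\<lambda>u. indicator {u\<in>Th. t < u} u *\<^sub>R f u)"
    by (auto simp: ff_def fun_eq_iff indicator_def)
  have "(\<integral>\<^sup>+ u. ennreal (ff u * indicator {t<..} u) \<partial>lborel) = ennreal (integral\<^sup>L lborel (\<lambda>u. ff u * indicator {t<..} u))"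
    by (rule nn_integral_eq_integral) (use si eq ff_nonneg in \<open>auto simp: set_integrable_def\<close>)
  also have "integral\<^sup>L lborel (\<lambda>u. ff u * indicator {t<..} u) = 1 - F t"
    using tail_aux[OF assms] eq by (simp add: set_lebesgue_integral_def)
  finally show ?thesis by simp
qed

lemma mean_nn: "(\<integral>\<^sup>+ u. ennreal (ff u * u) \<partial>lborel) < \<infinity>"
proof -
  have "integrable lborel (\<lambda>u. indicator Th u *\<^sub>R (u * f u))" using finite_mean by (simp add: set_integrable_def)
  then have "(\<integral>\<^sup>+ u. ennreal (norm (indicator Th u *\<^sub>R (u * f u))) \<partial>lborel) < \<infinity>"
    by (simp add: integrable_iff_bounded)
  moreover have "(\<lambda>u. ennreal (ff u * u)) = (\<lambda>u. ennreal (norm (indicator Th u *\<^sub>R (u * f u))))"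
    using f_nonneg by (auto simp: ff_def fun_eq_iff indicator_def Th_mem abs_mult)
  ultimately show ?thesis by simp
qed

lemma GG_nn_finite: "(\<integral>\<^sup>+ t. ennreal (GG t) \<partial>lborel) < \<infinity>"
proof -
  have m[measurable]: "(\<lambda>(t,u). ennreal (indicator Th t * (ff u * indicator {t<..} u))) \<in> borel_measurable (lborel \<Otimes>\<^sub>M lborel)"
  proof -
    have "{(t,u). t < (u::real)} \<in> sets (lborel \<Otimes>\<^sub>M lborel)"
    proof -
      have "Measurable.pred (lborel \<Otimes>\<^sub>M lborel) (\<lambda>x::real\<times>real. fst x < snd x)" by measurable
      then show ?thesis by (simp add: pred_def space_pair_measure case_prod_beta')
    qed
    moreover have "(\<lambda>(t,u). ennreal (indicator Th t * (ff u * indicator {t<..} u))) = (\<lambda>x. ennreal (indicator Th (fst x) * (ff (snd x) * indicator {(t,u). t < (u::real)} x)))"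
      by (auto simp: fun_eq_iff indicator_def)
    ultimately show ?thesis by simp
  qed
  have "(\<integral>\<^sup>+ t. ennreal (GG t) \<partial>lborel) = (\<integral>\<^sup>+ t. (\<integral>\<^sup>+ u. ennreal (indicator Th t * (ff u * indicator {t<..} u)) \<partial>lborel) \<partial>lborel)"
  proof (rule nn_integral_cong)
    fix t :: real
    show "ennreal (GG t) = (\<integral>\<^sup>+ u. ennreal (indicator Th t * (ff u * indicator {t<..} u)) \<partial>lborel)"
    proof (cases "t \<in> Th")
      case True then show ?thesis using G_nn[OF True] by (simp add: GG_def)
    next
      case False then show ?thesis by (simp add: GG_def)
    qed
  qed
  also have "\<dots> = (\<integral>\<^sup>+ u. (\<integral>\<^sup>+ t. ennreal (indicator Th t * (ff u * indicator {t<..} u)) \<partial>lborel) \<partial>lborel)"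
    using lborel_pair.Fubini'[OF m] by simp
  also have "\<dots> = (\<integral>\<^sup>+ u. ennreal (ff u * u) \<partial>lborel)"
  proof (rule nn_integral_cong)
    fix u :: real
    show "(\<integral>\<^sup>+ t. ennreal (indicator Th t * (ff u * indicator {t<..} u)) \<partial>lborel) = ennreal (ff u * u)"
    proof (cases "u \<in> Th")
      case True
      have "(\<lambda>t. ennreal (indicator Th t * (ff u * indicator {t<..} u))) = (\<lambda>t. ennreal (ff u) * indicator {0..<u} t)"
        using True Th_down[OF True] by (auto simp: fun_eq_iff indicator_def Th_mem)
      then have "(\<integral>\<^sup>+ t. ennreal (indicator Th t * (ff u * indicator {t<..} u)) \<partial>lborel) = ennreal (ff u) * emeasure lborel {0..<u}"
        by (simp add: nn_integral_cmult_indicator)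
      also have "\<dots> = ennreal (ff u * u)" using True f_nonneg[OF True] by (simp add: Th_mem ennreal_mult ff_def)
      finally show ?thesis .
    next
      case False then show ?thesis by (simp add: ff_def)
    qed
  qed
  finally show ?thesis using mean_nn by simp
qed

lemma G_int: "set_integrable lborel Th (\<lambda>t. 1 - F t)"
proof -
  have "integrable lborel GG"
    using GG_nn_finite GG_nonneg by (auto simp: integrable_iff_bounded)
  moreover have "GG = (\<lambda>t. indicator Th t *\<^sub>R (1 - F t))" by (simp add: GG_def fun_eq_iff)
  ultimately show ?thesis by (simp add: set_integrable_def)
qed


lemma W0_eq:
  "W0 tb F f s = (LINT t:Th|lborel. (1 - F t) * s t)"
  unfolding W0_def
  by (rule set_lebesgue_integral_cong) (use f_pos in \<open>auto simp: field_simps\<close>)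

lemma sf_int:
  assumes "set_borel_measurable lborel Th s" "bounded (s ` Th)" "A \<in> sets borel" "A \<subseteq> Th"
  shows "set_integrable lborel A (\<lambda>t. s t * f t)"
proof -
  obtain B where B: "\<forall>t\<in>Th. norm (s t) \<le> B" using assms(2) by (auto simp: bounded_iff)
  have "set_integrable lborel Th (\<lambda>t. B * f t)" using f_int by simp
  moreover have "set_borel_measurable lborel Th (\<lambda>t. s t * f t)"
  proof -
    have "(\<lambda>t. indicator Th t *\<^sub>R (s t * f t)) = (\<lambda>t. (indicator Th t *\<^sub>R s t) * ff t)"
      by (auto simp: fun_eq_iff ff_def indicator_def)
    moreover have "(\<lambda>t. indicator Th t *\<^sub>R s t) \<in> borel_measurable lborel"
      using assms(1) by (simp add: set_borel_measurable_def)
    ultimately show ?thesis unfolding set_borel_measurable_def by simp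
  qed
  moreover have "AE t in lborel. t \<in> Th \<longrightarrow> norm (s t * f t) \<le> norm (B * f t)"
  proof (rule AE_I2, rule impI)
    fix t assume t: "t \<in> Th"
    have "norm (s t * f t) = norm (s t) * f t" using f_nonneg[OF t] by (simp add: abs_mult)
    also have "\<dots> \<le> B * f t" using B t f_nonneg[OF t] by (simp add: mult_right_mono)
    also have "\<dots> \<le> norm (B * f t)" by simp
    finally show "norm (s t * f t) \<le> norm (B * f t)" .
  qed
  ultimately have "set_integrable lborel Th (\<lambda>t. s t * f t)" by (rule set_integrable_bound)
  then show ?thesis by (rule set_integrable_subset[OF _ _ assms(4)]) (use assms(3) in auto)
qed

lemma hf_int:
  assumes "in_MPS tb f sh s" "A \<in> sets borel" "A \<subseteq> Th"
  shows "set_integrable lborel A (\<lambda>t. s t * f t)" "set_integrable lborel A (\<lambda>t. sh t * f t)"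
    "set_integrable lborel A (\<lambda>t. (s t - sh t) * f t)"
proof -
  show a: "set_integrable lborel A (\<lambda>t. s t * f t)" using assms by (intro sf_int) (auto simp: in_MPS_def)
  show b: "set_integrable lborel A (\<lambda>t. sh t * f t)" using assms by (intro sf_int) (auto simp: in_MPS_def)
  have "set_integrable lborel A (\<lambda>t. s t * f t - sh t * f t)" using a b by (rule set_integral_diff)
  then show "set_integrable lborel A (\<lambda>t. (s t - sh t) * f t)" by (simp add: algebra_simps)
qed

lemma hf_diff:
  assumes "in_MPS tb f sh s" "A \<in> sets borel" "A \<subseteq> Th"
  shows "(LINT t:A|lborel. (s t - sh t) * f t) = (LINT t:A|lborel. s t * f t) - (LINT t:A|lborel. sh t * f t)"
proof -
  have "(LINT t:A|lborel. (s t - sh t) * f t) = (LINT t:A|lborel. s t * f t - sh t * f t)"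
    by (simp add: algebra_simps)
  also have "\<dots> = (LINT t:A|lborel. s t * f t) - (LINT t:A|lborel. sh t * f t)"
    using hf_int[OF assms] by (intro set_integral_diff) auto
  finally show ?thesis .
qed

lemma hf_tail:
  assumes "in_MPS tb f sh s" "x \<in> Th"
  shows "0 \<le> (LINT t:{t\<in>Th. x \<le> t}|lborel. (s t - sh t) * f t)"
  using hf_diff[OF assms(1), of "{t\<in>Th. x \<le> t}"] assms by (auto simp: in_MPS_def)

lemma hf_total:
  assumes "in_MPS tb f sh s"
  shows "(LINT t:Th|lborel. (s t - sh t) * f t) = 0"
  using hf_diff[OF assms(1), of Th] assms by (auto simp: in_MPS_def)

lemma not_ThO: "t \<in> Th \<Longrightarrow> t \<notin> ThetaO tb \<Longrightarrow> F t = 1"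
proof -
  assume t: "t \<in> Th" "t \<notin> ThetaO tb"
  then have "ereal t = tb" by (auto simp: Th_mem ThO_mem)
  then have e: "{u\<in>Th. t < u} = {}" by (auto simp: Th_mem)
  have "(LINT u:{u\<in>Th. t < u}|lborel. f u) = 0" by (simp only: e) (simp add: set_lebesgue_integral_def)
  then show "F t = 1" using tail_aux[OF t(1)] by simp
qed

lemma upset:
  assumes mps: "in_MPS tb f sh s" and V: "V \<in> sets borel" "V \<subseteq> Th"
    and up: "\<forall>t\<in>V. \<forall>u\<in>ThetaO tb. t \<le> u \<longrightarrow> u \<in> V"
  shows "0 \<le> (LINT t:V|lborel. (s t - sh t) * f t)"
proof (cases "V = {}")
  case True then show ?thesis by (simp add: set_lebesgue_integral_def)
next
  case False
  define x where "x = Inf V"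
  have bdd: "bdd_below V" unfolding bdd_below_def using V by (intro exI[of _ 0]) (auto simp: Th_mem)
  have x0: "0 \<le> x" unfolding x_def using False V by (intro cInf_greatest) (auto simp: Th_mem)
  obtain v where v: "v \<in> V" using False by auto
  have xv: "x \<le> v" unfolding x_def using v bdd by (rule cInf_lower)
  have xTh: "x \<in> Th" using Th_down[of v x] v V x0 xv by auto
  define c where "c = real_of_ereal tb"
  have ae: "AE t in lborel. (t \<in> {t\<in>Th. x \<le> t}) = (t \<in> V)"
    using AE_pt[of x] AE_pt[of c]
  proof eventually_elim
    case (elim t)
    show ?case
    proof
      assume t: "t \<in> {t\<in>Th. x \<le> t}"
      then have "x < t" using elim by auto
      then obtain w where w: "w \<in> V" "w < t" unfolding x_def using cInf_less_iff[OF False bdd] by auto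
      have "t \<in> ThetaO tb"
      proof -
        have "ereal t \<le> tb" "0 \<le> t" using t by (auto simp: Th_mem)
        moreover have "ereal t \<noteq> tb" using elim unfolding c_def by auto
        ultimately show ?thesis by (auto simp: ThO_mem)
      qed
      then show "t \<in> V" using up w by auto
    next
      assume "t \<in> V"
      then show "t \<in> {t\<in>Th. x \<le> t}" using V bdd unfolding x_def by (auto intro: cInf_lower)
    qed
  qed
  have "(LINT t:V|lborel. (s t - sh t) * f t) = (LINT t:{t\<in>Th. x \<le> t}|lborel. (s t - sh t) * f t)"
  proof (rule set_integral_cong_set)
    show "set_borel_measurable lborel {t\<in>Th. x \<le> t} (\<lambda>t. (s t - sh t) * f t)"
      using hf_int(3)[OF mps, of "{t\<in>Th. x \<le> t}"] by (auto simp: set_integrable_def set_borel_measurable_def)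
    show "set_borel_measurable lborel V (\<lambda>t. (s t - sh t) * f t)"
      using hf_int(3)[OF mps V] by (auto simp: set_integrable_def set_borel_measurable_def)
  qed (rule ae)
  then show ?thesis using hf_tail[OF mps xTh] by simp
qed


definition "gg t = GG t / ff t"

lemma gg_meas[measurable]: "gg \<in> borel_measurable borel"
  unfolding gg_def by measurable

lemma gg_Th: "t \<in> Th \<Longrightarrow> gg t = (1 - F t) / f t"
  by (simp add: gg_def GG_def ff_def)

lemma gg_nTh: "t \<notin> Th \<Longrightarrow> gg t = 0"
  by (simp add: gg_def GG_def ff_def)

lemma gg_nonneg: "0 \<le> gg t"
  using GG_nonneg ff_nonneg by (simp add: gg_def)

lemma gg_ff: "gg t * ff t = GG t"
  using f_pos by (cases "t \<in> Th") (auto simp: gg_def ff_def GG_def)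

lemma layer:
  fixes h :: "real \<Rightarrow> real"
  assumes hm: "(\<lambda>t. indicator Th t * h t) \<in> borel_measurable borel" and hb: "\<forall>t\<in>Th. \<bar>h t\<bar> \<le> 1"
  shows "(LINT t:Th|lborel. (1 - F t) * h t) = (LINT c:{0..}|lborel. (LINT t:{t\<in>Th. c < gg t}|lborel. h t * f t))"
proof -
  define hh where "hh t = (indicator Th t * h t) * ff t" for t
  have hh_meas[measurable]: "hh \<in> borel_measurable borel" unfolding hh_def using hm by measurable
  have hh_bd: "\<bar>hh t\<bar> \<le> ff t" for t
    using hb ff_nonneg[of t] by (cases "t \<in> Th") (auto simp: hh_def ff_def abs_mult intro: mult_left_le_one_le f_nonneg)
  define \<Phi> where "\<Phi> t c = indicator {0..<gg t} c * hh t" for t c :: real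
  have \<Phi>_if: "\<Phi> t c = (if 0 \<le> c \<and> c < gg t then hh t else 0)" for t c
    by (simp add: \<Phi>_def indicator_def)
  have meas: "(\<lambda>x. \<Phi> (fst x) (snd x)) \<in> borel_measurable (lborel \<Otimes>\<^sub>M lborel)"
    unfolding \<Phi>_if by measurable
  have bmeas: "(\<lambda>x. ennreal (indicator {0..<gg (fst x)} (snd x) * ff (fst x))) \<in> borel_measurable (lborel \<Otimes>\<^sub>M lborel)"
  proof -
    have "(\<lambda>x. ennreal (indicator {0..<gg (fst x)} (snd x) * ff (fst x))) = (\<lambda>x. ennreal (if 0 \<le> snd x \<and> snd x < gg (fst x) then ff (fst x) else 0))"
      by (auto simp: fun_eq_iff indicator_def)
    then show ?thesis by simp
  qed
  have "(\<integral>\<^sup>+ x. ennreal (norm (\<Phi> (fst x) (snd x))) \<partial>(lborel \<Otimes>\<^sub>M lborel)) \<le> (\<integral>\<^sup>+ x. ennreal (indicator {0..<gg (fst x)} (snd x) * ff (fst x)) \<partial>(lborel \<Otimes>\<^sub>M lborel))"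
  proof (rule nn_integral_mono)
    fix x :: "real \<times> real"
    show "ennreal (norm (\<Phi> (fst x) (snd x))) \<le> ennreal (indicator {0..<gg (fst x)} (snd x) * ff (fst x))"
      by (intro ennreal_leI) (simp add: \<Phi>_def indicator_def hh_bd)
  qed
  also have "\<dots> = (\<integral>\<^sup>+ t. \<integral>\<^sup>+ c. ennreal (indicator {0..<gg t} c * ff t) \<partial>lborel \<partial>lborel)"
    using lborel.nn_integral_fst[OF bmeas] by simp
  also have "\<dots> = (\<integral>\<^sup>+ t. ennreal (GG t) \<partial>lborel)"
  proof (rule nn_integral_cong)
    fix t :: real
    have "(\<integral>\<^sup>+ c. ennreal (indicator {0..<gg t} c * ff t) \<partial>lborel) = (\<integral>\<^sup>+ c. ennreal (ff t) * indicator {0..<gg t} c \<partial>lborel)"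
      by (rule nn_integral_cong) (auto simp: indicator_def)
    also have "\<dots> = ennreal (ff t) * ennreal (gg t)" using gg_nonneg[of t] by (simp add: nn_integral_cmult_indicator)
    also have "\<dots> = ennreal (GG t)" using gg_ff[of t] ff_nonneg[of t] gg_nonneg[of t] by (simp add: ennreal_mult[symmetric] mult.commute)
    finally show "(\<integral>\<^sup>+ c. ennreal (indicator {0..<gg t} c * ff t) \<partial>lborel) = ennreal (GG t)" .
  qed
  finally have "(\<integral>\<^sup>+ x. ennreal (norm (\<Phi> (fst x) (snd x))) \<partial>(lborel \<Otimes>\<^sub>M lborel)) < \<infinity>"
    using GG_nn_finite by (simp add: order_le_less_trans)
  then have int: "integrable (lborel \<Otimes>\<^sub>M lborel) (case_prod \<Phi>)"
    using meas by (simp add: integrable_iff_bounded case_prod_beta')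
  have fub: "(\<integral>c. \<integral>t. \<Phi> t c \<partial>lborel \<partial>lborel) = (\<integral>t. \<integral>c. \<Phi> t c \<partial>lborel \<partial>lborel)"
    by (rule lborel_pair.Fubini_integral[OF int])
  have ic: "(\<integral>c. \<Phi> t c \<partial>lborel) = indicator Th t *\<^sub>R ((1 - F t) * h t)" for t
  proof -
    have "(\<integral>c. \<Phi> t c \<partial>lborel) = measure lborel {0..<gg t} * hh t"
      by (simp add: \<Phi>_def)
    also have "measure lborel {0..<gg t} = gg t"
      using gg_nonneg[of t] by (simp add: measure_def)
    also have "gg t * hh t = indicator Th t *\<^sub>R ((1 - F t) * h t)"
      using f_pos by (cases "t \<in> Th") (auto simp: hh_def gg_Th ff_def)
    finally show ?thesis .
  qed
  have it: "(\<integral>t. \<Phi> t c \<partial>lborel) = indicator {0..} c *\<^sub>R (LINT t:{t\<in>Th. c < gg t}|lborel. h t * f t)" for c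
  proof (cases "0 \<le> c")
    case True
    have "(\<lambda>t. \<Phi> t c) = (\<lambda>t. indicator {t\<in>Th. c < gg t} t *\<^sub>R (h t * f t))"
    proof
      fix t show "\<Phi> t c = indicator {t\<in>Th. c < gg t} t *\<^sub>R (h t * f t)"
        using True gg_nTh[of t] by (cases "t \<in> Th") (auto simp: \<Phi>_if hh_def ff_def indicator_def)
    qed
    then show ?thesis using True by (simp add: set_lebesgue_integral_def)
  next
    case False
    then show ?thesis by (simp add: \<Phi>_if)
  qed
  show ?thesis
    using fub unfolding ic it by (simp add: set_lebesgue_integral_def)
qed


lemma Gs_int:
  assumes "set_borel_measurable lborel Th s" "\<forall>t\<in>Th. \<bar>s t\<bar> \<le> 1"
  shows "set_integrable lborel Th (\<lambda>t. (1 - F t) * s t)"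
proof (rule set_integrable_bound[OF G_int])
  have "(\<lambda>t. indicator Th t *\<^sub>R ((1 - F t) * s t)) = (\<lambda>t. GG t * (indicator Th t *\<^sub>R s t))"
    by (auto simp: fun_eq_iff GG_def indicator_def)
  moreover have "(\<lambda>t. indicator Th t *\<^sub>R s t) \<in> borel_measurable lborel"
    using assms(1) by (simp add: set_borel_measurable_def)
  ultimately show "set_borel_measurable lborel Th (\<lambda>t. (1 - F t) * s t)"
    unfolding set_borel_measurable_def by simp
  show "AE x in lborel. x \<in> Th \<longrightarrow> norm ((1 - F x) * s x) \<le> norm (1 - F x)"
  proof (rule AE_I2, rule impI)
    fix x assume x: "x \<in> Th"
    have "norm ((1 - F x) * s x) = \<bar>1 - F x\<bar> * \<bar>s x\<bar>" by (simp add: abs_mult)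
    also have "\<dots> \<le> \<bar>1 - F x\<bar> * 1" using assms(2) x by (intro mult_left_mono) auto
    finally show "norm ((1 - F x) * s x) \<le> norm (1 - F x)" by simp
  qed
qed

lemma adm_abs: "admissible tb s \<Longrightarrow> \<forall>t\<in>Th. \<bar>s t\<bar> \<le> 1"
  by (auto simp: admissible_def)

lemma W0_diff:
  assumes mps: "in_MPS tb f sh s" and as: "admissible tb s" and ash: "admissible tb sh"
  shows "W0 tb F f s - W0 tb F f sh = (LINT t:Th|lborel. (1 - F t) * (s t - sh t))"
proof -
  have i1: "set_integrable lborel Th (\<lambda>t. (1 - F t) * s t)"
    using mps adm_abs[OF as] by (intro Gs_int) (auto simp: in_MPS_def)
  have i2: "set_integrable lborel Th (\<lambda>t. (1 - F t) * sh t)"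
    using mps adm_abs[OF ash] by (intro Gs_int) (auto simp: in_MPS_def)
  have "(LINT t:Th|lborel. (1 - F t) * (s t - sh t)) = (LINT t:Th|lborel. (1 - F t) * s t - (1 - F t) * sh t)"
    by (simp add: algebra_simps)
  also have "\<dots> = (LINT t:Th|lborel. (1 - F t) * s t) - (LINT t:Th|lborel. (1 - F t) * sh t)"
    using i1 i2 by (rule set_integral_diff)
  finally show ?thesis by (simp add: W0_eq)
qed

lemma layer_diff:
  assumes mps: "in_MPS tb f sh s" and as: "admissible tb s" and ash: "admissible tb sh"
  shows "W0 tb F f s - W0 tb F f sh = (LINT c:{0..}|lborel. (LINT t:{t\<in>Th. c < gg t}|lborel. (s t - sh t) * f t))"
proof -
  have "(\<lambda>t. indicator Th t * (s t - sh t)) = (\<lambda>t. indicator Th t *\<^sub>R s t - indicator Th t *\<^sub>R sh t)"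
    by (auto simp: fun_eq_iff algebra_simps)
  moreover have "(\<lambda>t. indicator Th t *\<^sub>R s t) \<in> borel_measurable borel" "(\<lambda>t. indicator Th t *\<^sub>R sh t) \<in> borel_measurable borel"
    using mps by (auto simp: in_MPS_def set_borel_measurable_def)
  ultimately have hm: "(\<lambda>t. indicator Th t * (s t - sh t)) \<in> borel_measurable borel" by simp
  have hb: "\<forall>t\<in>Th. \<bar>s t - sh t\<bar> \<le> 1"
  proof
    fix t assume "t \<in> Th"
    then have "0 \<le> s t" "s t \<le> 1" "0 \<le> sh t" "sh t \<le> 1" using as ash by (auto simp: admissible_def)
    then show "\<bar>s t - sh t\<bar> \<le> 1" by linarith
  qed
  show ?thesis using W0_diff[OF assms] layer[OF hm hb] by simp
qed

lemma U_sets[measurable]: "{t\<in>Th. c < gg t} \<in> sets borel"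
  by measurable

lemma suff_IFR:
  assumes ifr: "IFR tb F f" and mps: "in_MPS tb f sh s" and as: "admissible tb s" and ash: "admissible tb sh"
  shows "W0 tb F f s \<le> W0 tb F f sh"
proof -
  have "(LINT c:{0..}|lborel. (LINT t:{t\<in>Th. c < gg t}|lborel. (s t - sh t) * f t)) \<le> 0"
  proof -
    have "0 \<le> (LINT c:{0..}|lborel. - (LINT t:{t\<in>Th. c < gg t}|lborel. (s t - sh t) * f t))"
    proof (rule set_int_nonneg)
      fix c :: real assume c: "c \<in> {0..}"
      define U where "U = {t\<in>Th. c < gg t}"
      define V where "V = Th - U"
      have Ub: "U \<in> sets borel" unfolding U_def by simp
      have Vb: "V \<in> sets borel" unfolding V_def using Ub by simp
      have up: "\<forall>t\<in>V. \<forall>u\<in>ThetaO tb. t \<le> u \<longrightarrow> u \<in> V"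
      proof (intro ballI impI)
        fix t u assume t: "t \<in> V" and u: "u \<in> ThetaO tb" and tu: "t \<le> u"
        have uTh: "u \<in> Th" using u ThO_sub by auto
        have tTh: "t \<in> Th" using t V_def by auto
        have "(1 - F u) / f u \<le> (1 - F t) / f t"
          using ifr tTh uTh tu unfolding IFR_def monotone_on_def by blast
        then have "gg u \<le> gg t" using gg_Th tTh uTh by simp
        moreover have "gg t \<le> c" using t by (auto simp: V_def U_def)
        ultimately show "u \<in> V" using uTh by (auto simp: V_def U_def)
      qed
      have V0: "0 \<le> (LINT t:V|lborel. (s t - sh t) * f t)"
        by (rule upset[OF mps Vb _ up]) (auto simp: V_def)
      have e: "Th = U \<union> V" and d: "U \<inter> V = {}" by (auto simp: U_def V_def)
      have "(LINT t:U \<union> V|lborel. (s t - sh t) * f t) = (LINT t:U|lborel. (s t - sh t) * f t) + (LINT t:V|lborel. (s t - sh t) * f t)"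
        by (rule set_integral_Un[OF d hf_int(3)[OF mps Ub] hf_int(3)[OF mps Vb]]) (auto simp: U_def V_def)
      then have "(LINT t:Th|lborel. (s t - sh t) * f t) = (LINT t:U|lborel. (s t - sh t) * f t) + (LINT t:V|lborel. (s t - sh t) * f t)"
        by (simp only: e[symmetric])
      then show "0 \<le> - (LINT t:{t\<in>Th. c < gg t}|lborel. (s t - sh t) * f t)"
        using hf_total[OF mps] V0 by (simp add: U_def)
    qed
    moreover have "(LINT c:{0..}|lborel. - (LINT t:{t\<in>Th. c < gg t}|lborel. (s t - sh t) * f t)) = - (LINT c:{0..}|lborel. (LINT t:{t\<in>Th. c < gg t}|lborel. (s t - sh t) * f t))"
      by (simp add: set_lebesgue_integral_def)
    ultimately show ?thesis by linarith
  qed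
  then show ?thesis using layer_diff[OF mps as ash] by simp
qed

lemma suff_DFR:
  assumes dfr: "DFR tb F f" and mps: "in_MPS tb f sh s" and as: "admissible tb s" and ash: "admissible tb sh"
  shows "W0 tb F f sh \<le> W0 tb F f s"
proof -
  have "0 \<le> (LINT c:{0..}|lborel. (LINT t:{t\<in>Th. c < gg t}|lborel. (s t - sh t) * f t))"
  proof (rule set_int_nonneg)
    fix c :: real assume c: "c \<in> {0..}"
    define U where "U = {t\<in>Th. c < gg t}"
    have Ub: "U \<in> sets borel" unfolding U_def by simp
    have up: "\<forall>t\<in>U. \<forall>u\<in>ThetaO tb. t \<le> u \<longrightarrow> u \<in> U"
    proof (intro ballI impI)
      fix t u assume t: "t \<in> U" and u: "u \<in> ThetaO tb" and tu: "t \<le> u"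
      have uTh: "u \<in> Th" using u ThO_sub by auto
      have tTh: "t \<in> Th" using t U_def by auto
      have tO: "t \<in> ThetaO tb"
      proof (rule ccontr)
        assume "t \<notin> ThetaO tb"
        then have "F t = 1" using not_ThO tTh by auto
        then have "gg t = 0" using gg_Th tTh by simp
        then show False using t c by (auto simp: U_def)
      qed
      have "(1 - F t) / f t \<le> (1 - F u) / f u"
        using dfr tO u tu unfolding DFR_def mono_on_def by blast
      then have "gg t \<le> gg u" using gg_Th tTh uTh by simp
      then show "u \<in> U" using t uTh by (auto simp: U_def)
    qed
    show "0 \<le> (LINT t:{t\<in>Th. c < gg t}|lborel. (s t - sh t) * f t)"
      using upset[OF mps Ub _ up] by (auto simp: U_def)
  qed
  then show ?thesis using layer_diff[OF mps as ash] by simp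
qed


definition "mix \<alpha> a b = (\<lambda>t::real. \<alpha> * indicator {a..} t + (1 - \<alpha>) * indicator {b..} t :: real)"

lemma mix_meas[measurable]: "mix \<alpha> a b \<in> borel_measurable borel"
  unfolding mix_def by measurable

lemma mix_range: "0 \<le> \<alpha> \<Longrightarrow> \<alpha> \<le> 1 \<Longrightarrow> 0 \<le> mix \<alpha> a b t \<and> mix \<alpha> a b t \<le> 1"
  by (auto simp: mix_def indicator_def)

lemma mix_adm: "0 \<le> \<alpha> \<Longrightarrow> \<alpha> \<le> 1 \<Longrightarrow> admissible tb (mix \<alpha> a b)"
  unfolding admissible_def
proof (intro conjI ballI)
  assume "0 \<le> \<alpha>" "\<alpha> \<le> 1"
  then show "mono_on Th (mix \<alpha> a b)"
    by (intro mono_onI) (auto simp: mix_def indicator_def)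
  fix x show "0 \<le> mix \<alpha> a b x" "mix \<alpha> a b x \<le> 1" using mix_range \<open>0 \<le> \<alpha>\<close> \<open>\<alpha> \<le> 1\<close> by auto
qed

lemma mix_sbm: "set_borel_measurable lborel Th (mix \<alpha> a b)"
  unfolding set_borel_measurable_def by measurable

lemma ind_restrict:
  fixes g :: "real \<Rightarrow> real"
  shows "(LINT t:A|lborel. g t * indicator {a..} t) = (LINT t:{t\<in>A. a \<le> t}|lborel. g t)"
  unfolding set_lebesgue_integral_def
  by (rule Bochner_Integration.integral_cong) (auto simp: indicator_def)

lemma st_tail:
  assumes "x \<in> Th" "a \<in> Th"
  shows "(LINT t:{t\<in>Th. x \<le> t}|lborel. f t * indicator {a..} t) = 1 - F (max x a)"
proof -
  have e: "{t \<in> {t\<in>Th. x \<le> t}. a \<le> t} = {t\<in>Th. max x a \<le> t}" by auto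
  have "max x a \<in> Th" using assms by (auto simp: max_def)
  then show ?thesis using tail[of "max x a"] ind_restrict[where g=f and A="{t\<in>Th. x \<le> t}" and a=a] unfolding e by simp
qed

lemma ind_int:
  assumes "a \<in> Th" "A \<in> sets borel" "A \<subseteq> Th"
  shows "set_integrable lborel A (\<lambda>t. f t * indicator {a..} t)"
proof -
  have "set_integrable lborel A (\<lambda>t. indicator {a..} t * f t)"
    by (rule sf_int) (auto simp: set_borel_measurable_def bounded_iff indicator_def assms intro!: exI[of _ 1])
  then show ?thesis by (simp add: mult.commute)
qed

lemma mix_tail:
  assumes "x \<in> Th" "a \<in> Th" "b \<in> Th"
  shows "(LINT t:{t\<in>Th. x \<le> t}|lborel. mix \<alpha> a b t * f t) = \<alpha> * (1 - F (max x a)) + (1 - \<alpha>) * (1 - F (max x b))"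
proof -
  let ?A = "{t\<in>Th. x \<le> t}"
  have A: "?A \<in> sets borel" "?A \<subseteq> Th" by auto
  have "(LINT t:?A|lborel. mix \<alpha> a b t * f t) = (LINT t:?A|lborel. \<alpha> * (f t * indicator {a..} t) + (1 - \<alpha>) * (f t * indicator {b..} t))"
    by (simp add: mix_def algebra_simps)
  also have "\<dots> = (LINT t:?A|lborel. \<alpha> * (f t * indicator {a..} t)) + (LINT t:?A|lborel. (1 - \<alpha>) * (f t * indicator {b..} t))"
    using ind_int[OF assms(2) A] ind_int[OF assms(3) A] by (intro set_integral_add) auto
  also have "\<dots> = \<alpha> * (LINT t:?A|lborel. f t * indicator {a..} t) + (1 - \<alpha>) * (LINT t:?A|lborel. f t * indicator {b..} t)"
    by (simp add: set_integral_mult_right)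
  finally show ?thesis using st_tail assms by simp
qed

definition "H m = (LINT t:{t\<in>Th. m \<le> t}|lborel. 1 - F t)"

lemma W0_mix:
  assumes "0 \<le> \<alpha>" "\<alpha> \<le> 1"
  shows "W0 tb F f (mix \<alpha> a b) = \<alpha> * H a + (1 - \<alpha>) * H b"
proof -
  have ia: "set_integrable lborel Th (\<lambda>t. (1 - F t) * indicator {a..} t)"
    by (rule Gs_int) (auto simp: set_borel_measurable_def)
  have ib: "set_integrable lborel Th (\<lambda>t. (1 - F t) * indicator {b..} t)"
    by (rule Gs_int) (auto simp: set_borel_measurable_def)
  have "W0 tb F f (mix \<alpha> a b) = (LINT t:Th|lborel. \<alpha> * ((1 - F t) * indicator {a..} t) + (1 - \<alpha>) * ((1 - F t) * indicator {b..} t))"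
    by (simp add: W0_eq mix_def algebra_simps)
  also have "\<dots> = (LINT t:Th|lborel. \<alpha> * ((1 - F t) * indicator {a..} t)) + (LINT t:Th|lborel. (1 - \<alpha>) * ((1 - F t) * indicator {b..} t))"
    using ia ib by (intro set_integral_add) auto
  also have "\<dots> = \<alpha> * (LINT t:Th|lborel. (1 - F t) * indicator {a..} t) + (1 - \<alpha>) * (LINT t:Th|lborel. (1 - F t) * indicator {b..} t)"
    by (simp add: set_integral_mult_right)
  finally show ?thesis by (simp add: ind_restrict H_def)
qed

lemma G_anti: "u \<in> Th \<Longrightarrow> v \<in> Th \<Longrightarrow> u \<le> v \<Longrightarrow> 1 - F v \<le> 1 - F u"
  using F_le by auto

lemma mix_mps:
  assumes a: "a \<in> Th" and b: "b \<in> Th" and m: "m \<in> Th" and am: "a \<le> m" and mb: "m \<le> b"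
    and al: "0 \<le> \<alpha>" "\<alpha> \<le> 1"
    and eq: "\<alpha> * (1 - F a) + (1 - \<alpha>) * (1 - F b) = 1 - F m"
  shows "in_MPS tb f (mix \<alpha> a b) (mix 1 m m)"
  unfolding in_MPS_def
proof (intro conjI ballI)
  show "set_borel_measurable lborel Th (mix 1 m m)" "set_borel_measurable lborel Th (mix \<alpha> a b)"
    by (rule mix_sbm)+
  show "bounded (mix 1 m m ` Th)" "bounded (mix \<alpha> a b ` Th)"
    using mix_range[of 1 m m] mix_range[OF al, of a b]
    by (auto simp: bounded_iff intro!: exI[of _ 1])
  fix x assume x: "x \<in> Th"
  have "\<alpha> * (1 - F (max x a)) + (1 - \<alpha>) * (1 - F (max x b)) \<le> 1 * (1 - F (max x m)) + (1 - 1) * (1 - F (max x m))"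
  proof (cases "x \<le> a")
    case True then show ?thesis using eq am mb by (simp add: max_def)
  next
    case xa: False
    show ?thesis
    proof (cases "x \<le> m")
      case True
      have "1 - F x \<le> 1 - F a" using G_anti[OF a x] xa by simp
      then have "\<alpha> * (1 - F x) \<le> \<alpha> * (1 - F a)" using al by (intro mult_left_mono) auto
      then show ?thesis using True xa eq am mb by (simp add: max_def)
    next
      case xm: False
      show ?thesis
      proof (cases "x \<le> b")
        case True
        have "1 - F b \<le> 1 - F x" using G_anti[OF x b] True by simp
        then have "(1 - \<alpha>) * (1 - F b) \<le> (1 - \<alpha>) * (1 - F x)" using al by (intro mult_left_mono) auto
        then show ?thesis using True xa xm am mb by (simp add: max_def algebra_simps)
      next
        case False
        then show ?thesis using xa xm am mb by (simp add: max_def algebra_simps)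
      qed
    qed
  qed
  then show "(LINT t:{t\<in>Th. x \<le> t}|lborel. mix \<alpha> a b t * f t) \<le> (LINT t:{t\<in>Th. x \<le> t}|lborel. mix 1 m m t * f t)"
    using mix_tail[OF x a b, of \<alpha>] mix_tail[OF x m m, of 1] by simp
next
  have "Th = {t\<in>Th. 0 \<le> t}" by (auto simp: Th_mem)
  then have "(LINT t:Th|lborel. mix \<alpha> a b t * f t) = \<alpha> * (1 - F (max 0 a)) + (1 - \<alpha>) * (1 - F (max 0 b))"
    "(LINT t:Th|lborel. mix 1 m m t * f t) = 1 * (1 - F (max 0 m)) + (1 - 1) * (1 - F (max 0 m))"
    using mix_tail[OF zero_Th(1) a b, of \<alpha>] mix_tail[OF zero_Th(1) m m, of 1] by simp_all
  moreover have "max 0 a = a" "max 0 b = b" "max 0 m = m" using a b m by (auto simp: Th_mem)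
  ultimately show "(LINT t:Th|lborel. mix \<alpha> a b t * f t) = (LINT t:Th|lborel. mix 1 m m t * f t)"
    using eq by simp
qed


lemma const_Ioc: "u \<le> v \<Longrightarrow> set_integrable lborel {u<..v} (\<lambda>_. c::real) \<and> (LINT t:{u<..v}|lborel. c) = (v - u) * c"
proof -
  assume uv: "u \<le> v"
  have "integrable lborel (\<lambda>t. indicator {u<..v} t * c)"
    using uv by (intro integrable_mult_left integrable_real_indicator) auto
  moreover have "(LINT t:{u<..v}|lborel. c) = (v - u) * c"
    using uv by (subst set_integral_const) (auto simp: measure_def)
  ultimately show ?thesis by (simp add: set_integrable_def)
qed

lemma const_Ico: "u \<le> v \<Longrightarrow> set_integrable lborel {u..<v} (\<lambda>_. c::real) \<and> (LINT t:{u..<v}|lborel. c) = (v - u) * c"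
proof -
  assume uv: "u \<le> v"
  have "integrable lborel (\<lambda>t. indicator {u..<v} t * c)"
    using uv by (intro integrable_mult_left integrable_real_indicator) auto
  moreover have "(LINT t:{u..<v}|lborel. c) = (v - u) * c"
    using uv by (subst set_integral_const) (auto simp: measure_def)
  ultimately show ?thesis by (simp add: set_integrable_def)
qed

lemma Ioc_sub: "0 \<le> u \<Longrightarrow> v \<in> Th \<Longrightarrow> {u<..v} \<subseteq> Th"
  using Th_down by auto

lemma Ico_sub: "0 \<le> u \<Longrightarrow> v \<in> Th \<Longrightarrow> {u..<v} \<subseteq> Th"
  using Th_down by auto

lemma F_bounds:
  assumes u: "0 \<le> u" and v: "v \<in> Th" and uv: "u \<le> v"
    and b: "\<forall>t\<in>{u<..v}. lo \<le> f t \<and> f t \<le> hi"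
  shows "(v - u) * lo \<le> F v - F u \<and> F v - F u \<le> (v - u) * hi"
proof -
  have uTh: "u \<in> Th" using Th_down[OF v u uv] .
  have fi: "set_integrable lborel {u<..v} f" using f_int_sub Ioc_sub[OF u v] by auto
  have "(LINT t:{u<..v}|lborel. lo) \<le> (LINT t:{u<..v}|lborel. f t)"
    using const_Ioc[OF uv, of lo] fi b by (intro set_integral_mono) auto
  moreover have "(LINT t:{u<..v}|lborel. f t) \<le> (LINT t:{u<..v}|lborel. hi)"
    using const_Ioc[OF uv, of hi] fi b by (intro set_integral_mono) auto
  ultimately show ?thesis using F_split[OF uTh v uv] const_Ioc[OF uv] by simp
qed

lemma H_diff:
  assumes u: "u \<in> Th" and v: "v \<in> Th" and uv: "u \<le> v"
  shows "H u - H v = (LINT t:{u..<v}|lborel. 1 - F t)"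
proof -
  have u0: "0 \<le> u" using u Th_mem by auto
  have e: "{t\<in>Th. u \<le> t} = {u..<v} \<union> {t\<in>Th. v \<le> t}" using Ico_sub[OF u0 v] uv by auto
  have d: "{u..<v} \<inter> {t\<in>Th. v \<le> t} = {}" by auto
  have i1: "set_integrable lborel {u..<v} (\<lambda>t. 1 - F t)"
    by (rule set_integrable_subset[OF G_int]) (use Ico_sub[OF u0 v] in auto)
  have i2: "set_integrable lborel {t\<in>Th. v \<le> t} (\<lambda>t. 1 - F t)"
    by (rule set_integrable_subset[OF G_int]) auto
  have "H u = (LINT t:{u..<v}|lborel. 1 - F t) + H v"
    unfolding H_def e by (rule set_integral_Un[OF d i1 i2])
  then show ?thesis by simp
qed

lemma H_bounds:
  assumes u: "u \<in> Th" and v: "v \<in> Th" and uv: "u \<le> v"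
  shows "(v - u) * (1 - F v) \<le> H u - H v \<and> H u - H v \<le> (v - u) * (1 - F u)"
proof -
  have u0: "0 \<le> u" using u Th_mem by auto
  have i1: "set_integrable lborel {u..<v} (\<lambda>t. 1 - F t)"
    by (rule set_integrable_subset[OF G_int]) (use Ico_sub[OF u0 v] in auto)
  have b: "1 - F v \<le> 1 - F t \<and> 1 - F t \<le> 1 - F u" if "t \<in> {u..<v}" for t
    using that G_anti[of u t] G_anti[of t v] Ico_sub[OF u0 v] u v by auto
  have "(LINT t:{u..<v}|lborel. 1 - F v) \<le> (LINT t:{u..<v}|lborel. 1 - F t)"
    using const_Ico[OF uv, of "1 - F v"] i1 b by (intro set_integral_mono) auto
  moreover have "(LINT t:{u..<v}|lborel. 1 - F t) \<le> (LINT t:{u..<v}|lborel. 1 - F u)"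
    using const_Ico[OF uv, of "1 - F u"] i1 b by (intro set_integral_mono) auto
  ultimately show ?thesis using H_diff[OF u v uv] const_Ico[OF uv] by simp
qed

lemma f_cont_at:
  assumes x: "x \<in> Th" and e: "0 < e"
  shows "\<exists>d>0. \<forall>t\<in>Th. \<bar>t - x\<bar> < d \<longrightarrow> \<bar>f t - f x\<bar> < e"
  using f_cont x e unfolding continuous_on_iff dist_real_def by blast

lemma F_strict:
  assumes u: "u \<in> Th" and v: "v \<in> Th" and uv: "u < v"
  shows "F u < F v"
proof -
  have fu: "0 < f u" using f_pos u by auto
  obtain d where d: "d > 0" "\<forall>t\<in>Th. \<bar>t - u\<bar> < d \<longrightarrow> \<bar>f t - f u\<bar> < f u / 2"
    using f_cont_at[OF u, of "f u / 2"] fu by auto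
  define w where "w = min v (u + d / 2)"
  have u0: "0 \<le> u" using u Th_mem by auto
  have wTh: "w \<in> Th" using Th_down[OF v] u0 uv d by (auto simp: w_def)
  have uw: "u < w" using uv d by (auto simp: w_def)
  have "\<forall>t\<in>{u<..w}. f u / 2 \<le> f t \<and> f t \<le> 2 * f u"
  proof
    fix t assume t: "t \<in> {u<..w}"
    then have "t \<in> Th" using Ioc_sub[OF u0 wTh] by auto
    moreover have "\<bar>t - u\<bar> < d" using t d by (auto simp: w_def)
    ultimately have "\<bar>f t - f u\<bar> < f u / 2" using d by blast
    then show "f u / 2 \<le> f t \<and> f t \<le> 2 * f u" by linarith
  qed
  from F_bounds[OF u0 wTh less_imp_le[OF uw] this] have "(w - u) * (f u / 2) \<le> F w - F u" by linarith
  moreover have "0 < (w - u) * (f u / 2)" using uw fu by simp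
  moreover have "F w \<le> F v" using F_le[OF wTh v] by (auto simp: w_def)
  ultimately show ?thesis by linarith
qed


lemma limx:
  assumes x: "x \<in> Th" and y: "y \<in> Th" and xy: "x < y" and r: "r < (1 - F x) / f x"
  shows "\<exists>m. x < m \<and> m < y \<and> r * (F m - F x) < H x - H m"
proof (cases "r \<le> 0")
  case True
  define m where "m = (x + y) / 2"
  have x0: "0 \<le> x" using x Th_mem by auto
  have m: "x < m" "m < y" using xy by (auto simp: m_def)
  have mTh: "m \<in> Th" using Th_down[OF y] x0 m by auto
  have "(m - x) * (1 - F m) \<le> H x - H m" using H_bounds[OF x mTh] m by auto
  moreover have "0 < 1 - F m" using F_strict[OF mTh y m(2)] G_nonneg[OF y] by linarith
  ultimately have "0 < H x - H m" using m by (smt (verit) mult_pos_pos)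
  moreover have "r * (F m - F x) \<le> 0" using True F_le[OF x mTh] m by (simp add: mult_nonpos_nonneg)
  ultimately show ?thesis using m by (intro exI[of _ m]) auto
next
  case False
  then have r0: "0 < r" by simp
  have fx: "0 < f x" using f_pos x by auto
  have rG: "r * f x < 1 - F x" using r fx by (simp add: field_simps)
  define e where "e = (1 - F x - r * f x) / (2 * r)"
  have e0: "0 < e" using rG r0 by (simp add: e_def)
  define k where "k = 1 - F x - r * (f x + e)"
  have k: "k = (1 - F x - r * f x) / 2" using r0 by (simp add: k_def e_def field_simps)
  have k0: "0 < k" using rG k by simp
  obtain \<delta> where \<delta>: "\<delta> > 0" "\<forall>t\<in>Th. \<bar>t - x\<bar> < \<delta> \<longrightarrow> \<bar>f t - f x\<bar> < e"
    using f_cont_at[OF x e0] by auto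
  have fe: "0 < f x + e" using fx e0 by simp
  define M where "M = min (min \<delta> (y - x)) (k / (f x + e))"
  define d where "d = M / 2"
  have kf: "0 < k / (f x + e)" using k0 fe by simp
  have M: "0 < M" "M \<le> \<delta>" "M \<le> y - x" "M \<le> k / (f x + e)" using \<delta>(1) xy kf by (auto simp: M_def)
  have d0: "0 < d" using M by (simp add: d_def)
  have dM: "d < M" using M(1) by (simp add: d_def)
  have dd: "d < \<delta>" "d < y - x" "d < k / (f x + e)" using dM M(2-4) by linarith+
  define m where "m = x + d"
  have x0: "0 \<le> x" using x Th_mem by auto
  have m: "x < m" "m < y" using d0 dd by (auto simp: m_def)
  have mTh: "m \<in> Th" using Th_down[OF y] x0 m by auto
  have b: "\<forall>t\<in>{x<..m}. f x - e \<le> f t \<and> f t \<le> f x + e"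
  proof
    fix t assume t: "t \<in> {x<..m}"
    then have "t \<in> Th" using Ioc_sub[OF x0 mTh] by auto
    moreover have "\<bar>t - x\<bar> < \<delta>" using t dd by (auto simp: m_def)
    ultimately have "\<bar>f t - f x\<bar> < e" using \<delta> by blast
    then show "f x - e \<le> f t \<and> f t \<le> f x + e" by linarith
  qed
  have Q: "F m - F x \<le> d * (f x + e)" using F_bounds[OF x0 mTh less_imp_le[OF m(1)] b] by (simp add: m_def)
  have P: "H x - H m \<ge> d * ((1 - F x) - (F m - F x))" using H_bounds[OF x mTh] m by (simp add: m_def)
  have dk: "d * (f x + e) < 1 - F x - r * (f x + e)"
    using dd(3) fe by (simp add: field_simps k_def)
  show ?thesis using limx_arith[OF d0 dk r0 Q P] m by blast
qed

lemma limy: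
  assumes x: "x \<in> Th" and y: "y \<in> Th" and xy: "x < y" and r: "(1 - F y) / f y < r"
  shows "\<exists>m. x < m \<and> m < y \<and> H m - H y < r * (F y - F m)"
proof -
  have fy: "0 < f y" using f_pos y by auto
  have Gy: "0 \<le> 1 - F y" using G_nonneg[OF y] .
  have r0: "0 < r" using r fy Gy by (smt (verit) divide_nonneg_pos)
  have rG: "1 - F y < r * f y" using r fy by (simp add: field_simps)
  define e where "e = (r * f y - (1 - F y)) / (2 * r)"
  have e0: "0 < e" using rG r0 by (simp add: e_def)
  define l where "l = f y - e"
  have l: "l = (r * f y + (1 - F y)) / (2 * r)" using r0 by (simp add: l_def e_def field_simps)
  have l0: "0 < l" unfolding l using r0 fy Gy by (intro divide_pos_pos) (auto simp: add_pos_nonneg)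
  define k where "k = r * l - (1 - F y)"
  have k: "k = (r * f y - (1 - F y)) / 2" using r0 by (simp add: k_def l field_simps)
  have k0: "0 < k" using rG k by simp
  obtain \<delta> where \<delta>: "\<delta> > 0" "\<forall>t\<in>Th. \<bar>t - y\<bar> < \<delta> \<longrightarrow> \<bar>f t - f y\<bar> < e"
    using f_cont_at[OF y e0] by auto
  define M where "M = min (min \<delta> (y - x)) (min r (k / l))"
  define d where "d = M / 2"
  have kl: "0 < k / l" using k0 l0 by simp
  have M: "0 < M" "M \<le> \<delta>" "M \<le> y - x" "M \<le> r" "M \<le> k / l" using \<delta>(1) xy kl r0 by (auto simp: M_def)
  have d0: "0 < d" using M by (simp add: d_def)
  have dM: "d < M" using M(1) by (simp add: d_def)
  have dd: "d < \<delta>" "d < y - x" "d < r" "d < k / l" using dM M(2-5) by linarith+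
  define m where "m = y - d"
  have x0: "0 \<le> x" using x Th_mem by auto
  have m: "x < m" "m < y" using d0 dd by (auto simp: m_def)
  have m0: "0 \<le> m" using x0 m by simp
  have mTh: "m \<in> Th" using Th_down[OF y] m0 m by auto
  have b: "\<forall>t\<in>{m<..y}. f y - e \<le> f t \<and> f t \<le> f y + e"
  proof
    fix t assume t: "t \<in> {m<..y}"
    then have "t \<in> Th" using Ioc_sub[OF m0 y] by auto
    moreover have "\<bar>t - y\<bar> < \<delta>" using t dd by (auto simp: m_def)
    ultimately have "\<bar>f t - f y\<bar> < e" using \<delta> by blast
    then show "f y - e \<le> f t \<and> f t \<le> f y + e" by linarith
  qed
  have Q: "F y - F m \<ge> d * l" using F_bounds[OF m0 y less_imp_le[OF m(2)] b] by (simp add: m_def l_def)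
  have P: "H m - H y \<le> d * ((1 - F y) + (F y - F m))" using H_bounds[OF mTh y] m by (simp add: m_def)
  have dl: "d * l < r * l - (1 - F y)"
    using dd(4) l0 by (simp add: field_simps k_def)
  show ?thesis using limy_arith[OF d0 dd(3) dl l0 Q P] m by blast
qed

lemma chord_ineq:
  assumes hyp: "\<forall>s sh. admissible tb s \<and> admissible tb sh \<and> in_MPS tb f sh s \<longrightarrow> W0 tb F f sh \<le> W0 tb F f s"
    and a: "a \<in> Th" and m: "m \<in> Th" and b: "b \<in> Th" and am: "a < m" and mb: "m < b"
  shows "(F b - F m) * (H a - H m) \<le> (F m - F a) * (H m - H b)"
proof -
  have Qab: "0 < F b - F a" using F_strict[OF a b] am mb by simp
  have Qmb: "0 \<le> F b - F m" using F_le[OF m b] mb by simp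
  have Qam: "0 \<le> F m - F a" using F_le[OF a m] am by simp
  define \<alpha> where "\<alpha> = (F b - F m) / (F b - F a)"
  have al: "0 \<le> \<alpha>" "\<alpha> \<le> 1" using Qab Qmb Qam by (auto simp: \<alpha>_def field_simps)
  have aQ: "\<alpha> * (F b - F a) = F b - F m" using Qab by (simp add: \<alpha>_def)
  have eq: "\<alpha> * (1 - F a) + (1 - \<alpha>) * (1 - F b) = 1 - F m"
    using aQ by (simp add: algebra_simps)
  have "W0 tb F f (mix \<alpha> a b) \<le> W0 tb F f (mix 1 m m)"
    using hyp mix_adm[OF al] mix_adm[of 1 m m] mix_mps[OF a b m _ _ al eq] am mb by auto
  then have "\<alpha> * H a + (1 - \<alpha>) * H b \<le> H m" using W0_mix[OF al] W0_mix[of 1 m m] by simp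
  then have "(F b - F a) * (\<alpha> * H a + (1 - \<alpha>) * H b) \<le> (F b - F a) * H m"
    using Qab by (intro mult_left_mono) auto
  moreover have "(F b - F a) * (\<alpha> * H a + (1 - \<alpha>) * H b) = (\<alpha> * (F b - F a)) * H a + (F b - F a) * H b - (\<alpha> * (F b - F a)) * H b"
    by (simp add: algebra_simps)
  then have "(F b - F a) * (\<alpha> * H a + (1 - \<alpha>) * H b) = (F b - F m) * H a + (F m - F a) * H b"
    unfolding aQ by (simp add: algebra_simps)
  ultimately show ?thesis by (simp add: algebra_simps)
qed

lemma nec_DFR:
  assumes hyp: "\<forall>s sh. admissible tb s \<and> admissible tb sh \<and> in_MPS tb f sh s \<longrightarrow> W0 tb F f sh \<le> W0 tb F f s"
  shows "DFR tb F f"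
  unfolding DFR_def
proof (rule mono_onI, rule ccontr)
  fix x y assume xO: "x \<in> ThetaO tb" and yO: "y \<in> ThetaO tb" and xy: "x \<le> y"
    and nle: "\<not> (1 - F x) / f x \<le> (1 - F y) / f y"
  have x: "x \<in> Th" and y: "y \<in> Th" using xO yO ThO_sub by auto
  have xy': "x < y" using xy nle by (cases "x = y") auto
  have pos: "0 < F m - F x \<and> 0 < F y - F m" if "x < m" "m < y" for m
  proof -
    have "m \<in> Th" using Th_down[OF y] x Th_mem that by auto
    then show ?thesis using F_strict[OF x] F_strict[OF _ y] that by auto
  qed
  have ineq: "(F y - F m) * (H x - H m) \<le> (F m - F x) * (H m - H y)" if "x < m" "m < y" for m
  proof -
    have "m \<in> Th" using Th_down[OF y] x Th_mem that by auto
    then show ?thesis using chord_ineq[OF hyp x _ y] that by auto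
  qed
  define r where "r = (H x - H y) / (F y - F x)"
  have Qxy: "0 < F y - F x" using F_strict[OF x y xy'] by simp
  have split: "(H x - H m) + (H m - H y) = r * ((F m - F x) + (F y - F m))" for m
    using Qxy by (simp add: r_def field_simps)
  show False
  proof (cases "r < (1 - F x) / f x")
    case True
    obtain m where m: "x < m" "m < y" "r * (F m - F x) < H x - H m" using limx[OF x y xy' True] by auto
    show False using core[of "F m - F x" "F y - F m" "H x - H m" "H m - H y" r] pos[OF m(1,2)] ineq[OF m(1,2)] split[of m] m(3)
      by (simp add: mult.commute)
  next
    case False
    then have "(1 - F y) / f y < r" using nle by simp
    then obtain m where m: "x < m" "m < y" "H m - H y < r * (F y - F m)" using limy[OF x y xy'] by auto
    show False using core[of "F m - F x" "F y - F m" "H x - H m" "H m - H y" r] pos[OF m(1,2)] ineq[OF m(1,2)] split[of m] m(3)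
      by (simp add: mult.commute)
  qed
qed

end

theorem mainTheorem14:
  fixes tb :: ereal and F f :: "real \<Rightarrow> real"
  assumes tb_pos: "0 < tb"
    and f_cont: "continuous_on (Theta tb) f"
    and f_pos: "\<forall>x\<in>Theta tb. 0 < f x"
    and f_int: "set_integrable lborel (Theta tb) f"
    and f_total: "(LINT t:Theta tb|lborel. f t) = 1"
    and F_def: "\<forall>x\<in>Theta tb. F x = (LINT t:{0..x}|lborel. f t)"
    and finite_mean: "set_integrable lborel (Theta tb) (\<lambda>t. t * f t)"
  shows "(IFR tb F f \<longrightarrow>
            (\<forall>s sh. admissible tb s \<and> admissible tb sh \<and> in_MPS tb f sh s
                \<longrightarrow> W0 tb F f sh \<ge> W0 tb F f s))
       \<and> ((\<forall>s sh. admissible tb s \<and> admissible tb sh \<and> in_MPS tb f sh s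
                \<longrightarrow> W0 tb F f sh \<le> W0 tb F f s) \<longleftrightarrow> DFR tb F f)"
proof -
  interpret mps tb F f
    using tb_pos f_cont f_pos f_int f_total F_def finite_mean by unfold_locales
  show ?thesis
  proof (intro conjI impI allI iffI)
    fix s sh
    assume "IFR tb F f" "admissible tb s \<and> admissible tb sh \<and> in_MPS tb f sh s"
    then show "W0 tb F f sh \<ge> W0 tb F f s" using suff_IFR by blast
  next
    assume "\<forall>s sh. admissible tb s \<and> admissible tb sh \<and> in_MPS tb f sh s \<longrightarrow> W0 tb F f sh \<le> W0 tb F f s"
    then show "DFR tb F f" by (rule nec_DFR)
  next
    fix s sh
    assume "DFR tb F f" "admissible tb s \<and> admissible tb sh \<and> in_MPS tb f sh s"
    then show "W0 tb F f sh \<le> W0 tb F f s" using suff_DFR by blast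
  qed
qed

end
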